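(* Let $\{X_t\}_{t\in\mathbb N^+}$ be a real-valued process adapted to a filtration $\{\mathcal F_t\}_{t\in\mathbb N}$ with $\mathcal F_0$ trivial, such that for all $t\in\mathbb N^+$, $\mathbb E[X_t\mid\mathcal F_{t-1}]=\mu$ (a constant) and $\mathbb E[(X_t-\mu)^2\mid\mathcal F_{t-1}]\le\sigma^2$. Let $\{\lambda_t\}_{t\in\mathbb N^+}$ be any predictable process (each $\lambda_t$ is $\mathcal F_{t-1}$-measurable). Then the process $$M^{\mathsf{SN}}_t=\prod_{i=1}^t\exp\left(\lambda_i(X_i-\mu)-\frac{\lambda_i^2\left((X_i-\mu)^2+2\sigma^2\right)}{6}\right),\qquad M^{\mathsf{SN}}_0=1,$$ is a nonnegative supermartingale with respect to $\{\mathcal F_t\}$. *)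

theory Defs
  imports "HOL-Probability.Probability"
begin

definition is_filtration :: "'a measure \<Rightarrow> (nat \<Rightarrow> 'a measure) \<Rightarrow> bool" where
  "is_filtration M F \<longleftrightarrow> (\<forall>t. subalgebra M (F t)) \<and> (\<forall>s t. s \<le> t \<longrightarrow> sets (F s) \<subseteq> sets (F t))"

definition supermartingale :: "'a measure \<Rightarrow> (nat \<Rightarrow> 'a measure) \<Rightarrow> (nat \<Rightarrow> 'a \<Rightarrow> real) \<Rightarrow> bool" where
  "supermartingale M F Y \<longleftrightarrow>
     (\<forall>t. Y t \<in> borel_measurable (F t)) \<and> (\<forall>t. integrable M (Y t)) \<and>
     (\<forall>s t. s \<le> t \<longrightarrow> (AE x in M. real_cond_exp M (F s) (Y t) x \<le> Y s x))"

definition M_SN :: "(nat \<Rightarrow> 'a \<Rightarrow> real) \<Rightarrow> (nat \<Rightarrow> 'a \<Rightarrow> real) \<Rightarrow> real \<Rightarrow> real \<Rightarrow> nat \<Rightarrow> 'a \<Rightarrow> real" where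
  "M_SN X lam \<mu> \<sigma> t \<omega> =
     (\<Prod>i\<in>{1..t}. exp (lam i \<omega> * (X i \<omega> - \<mu>)
        - (lam i \<omega>)\<^sup>2 * ((X i \<omega> - \<mu>)\<^sup>2 + 2 * \<sigma>\<^sup>2) / 6))"

end

theory Submission
  imports Defs
begin

lemma qpos: "(0::real) < 1 + z + z^2/3"
proof -
  have "0 \<le> (z + 3/2)^2" by simp
  then show ?thesis by (simp add: power2_eq_square algebra_simps)
qed

lemma key_ineq: "exp (z - z^2/6) \<le> 1 + z + (z::real)^2/3"
proof -
  define f where "f = (\<lambda>z::real. ln (1 + z + z^2/3) - z + z^2/6)"
  have D: "(f has_real_derivative (z^3/(9*(1+z+z^2/3)))) (at z)" for z :: real
  proof -
    have "(f has_real_derivative ((1 + 2*z/3)/(1+z+z^2/3) - 1 + z/3)) (at z)"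
      unfolding f_def using qpos[of z]
      by (auto intro!: derivative_eq_intros simp: field_simps)
    moreover have "(1 + 2*z/3)/(1+z+z^2/3) - 1 + z/3 = z^3/(9*(1+z+z^2/3))"
      using qpos[of z] by (simp add: field_simps power2_eq_square power3_eq_cube) 
    ultimately show ?thesis by simp
  qed
  have f0: "f 0 = 0" by (simp add: f_def)
  have "f 0 \<le> f z"
  proof (cases "z \<ge> 0")
    case True
    show ?thesis
    proof (rule DERIV_nonneg_imp_nondecreasing[OF True])
      fix x :: real assume "0 \<le> x"
      then have "0 \<le> x^3/(9*(1+x+x^2/3))" using qpos[of x] by simp
      then show "\<exists>y. DERIV f x :> y \<and> 0 \<le> y" using D[of x] by blast
    qed
  next
    case False
    show ?thesis
    proof (rule DERIV_nonpos_imp_nonincreasing[of z 0])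
      show "z \<le> 0" using False by simp
      fix x :: real assume "x \<le> 0"
      have "x^3 = x * x^2" by (simp add: power2_eq_square power3_eq_cube)
      then have "x^3 \<le> 0" using \<open>x \<le> 0\<close> by (simp add: mult_nonpos_nonneg)
      then have "x^3/(9*(1+x+x^2/3)) \<le> 0" using qpos[of x] by (simp add: divide_nonpos_pos)
      then show "\<exists>y. DERIV f x :> y \<and> y \<le> 0" using D[of x] by blast
    qed
  qed
  then have "z - z^2/6 \<le> ln (1 + z + z^2/3)" using f0 by (simp add: f_def)
  then have "exp (z - z^2/6) \<le> exp (ln (1 + z + z^2/3))" by simp
  also have "\<dots> = 1 + z + z^2/3" using qpos[of z] by simp
  finally show ?thesis .
qed


lemma integrable_bdd_mult:
  fixes g c :: "'a \<Rightarrow> real"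
  assumes "integrable M g" "c \<in> borel_measurable M" "\<And>x. x \<in> space M \<Longrightarrow> \<bar>c x\<bar> \<le> B"
  shows "integrable M (\<lambda>x. c x * g x)"
proof (rule Bochner_Integration.integrable_bound[where f="\<lambda>x. B * g x"])
  show "integrable M (\<lambda>x. B * g x)" using assms(1) by simp
  show "(\<lambda>x. c x * g x) \<in> borel_measurable M" using assms(1,2) by (simp add: borel_measurable_integrable)
  show "AE x in M. norm (c x * g x) \<le> norm (B * g x)"
  proof (rule AE_I2)
    fix x assume "x \<in> space M"
    then have "\<bar>c x\<bar> \<le> B" by (rule assms(3))
    then have "\<bar>c x\<bar> * \<bar>g x\<bar> \<le> \<bar>B\<bar> * \<bar>g x\<bar>" by (intro mult_right_mono) auto
    then show "norm (c x * g x) \<le> norm (B * g x)" by (simp add: abs_mult)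
  qed
qed

lemma exp_bound: "exp (z - z^2/6 - w) \<le> exp (3/2)" if "w \<ge> 0" for z w :: real
proof -
  have "0 \<le> (z - 3)^2" by simp
  then have "z - z^2/6 - w \<le> 3/2" using that by (simp add: power2_eq_square algebra_simps)
  then show ?thesis by simp
qed

lemma factor_le_poly:
  fixes l y s :: real
  shows "exp (l * y - l^2 * (y^2 + 2 * s^2) / 6) \<le> exp (- (l^2 * s^2 / 3)) * (1 + l * y + l^2 * y^2 / 3)"
proof -
  have e: "l * y - l^2 * (y^2 + 2 * s^2) / 6 = - (l^2 * s^2 / 3) + ((l * y) - (l * y)^2 / 6)"
    by (simp add: power_mult_distrib algebra_simps)
  have "exp (l * y - l^2 * (y^2 + 2 * s^2) / 6) = exp (- (l^2 * s^2 / 3)) * exp ((l * y) - (l * y)^2 / 6)"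
    unfolding e exp_add by simp
  also have "\<dots> \<le> exp (- (l^2 * s^2 / 3)) * (1 + l*y + (l*y)^2/3)"
    by (intro mult_left_mono key_ineq) auto
  finally show ?thesis by (simp add: power_mult_distrib)
qed

lemma factor_le: "exp (l * y - l^2 * (y^2 + 2 * s^2) / 6) \<le> exp (3/2)" for l y s :: real
proof -
  have "l * y - l^2 * (y^2 + 2 * s^2) / 6 = (l * y) - (l * y)^2 / 6 - l^2 * s^2 / 3"
    by (simp add: power_mult_distrib algebra_simps)
  then show ?thesis using exp_bound[of "l^2 * s^2 / 3" "l * y"] by simp
qed

lemma c_bound: "exp (- (u::real)) * (1 + u) \<le> 1"
proof -
  have "exp (- u) * (1 + u) \<le> exp (- u) * exp u" by (intro mult_left_mono exp_ge_add_one_self) auto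
  then show ?thesis by (simp add: exp_minus)
qed


theorem lemma4:
  fixes M :: "'a measure" and F :: "nat \<Rightarrow> 'a measure"
    and X lam :: "nat \<Rightarrow> 'a \<Rightarrow> real" and \<mu> \<sigma> :: real
  assumes "prob_space M"
    and "is_filtration M F"
    and "sets (F 0) = {{}, space M}"
    and "\<And>t. t \<ge> 1 \<Longrightarrow> X t \<in> borel_measurable (F t)"
    and "\<And>t. t \<ge> 1 \<Longrightarrow> integrable M (X t)"
    and "\<And>t. t \<ge> 1 \<Longrightarrow> AE \<omega> in M. real_cond_exp M (F (t - 1)) (X t) \<omega> = \<mu>"
    and "\<And>t. t \<ge> 1 \<Longrightarrow> AE \<omega> in M.
           nn_cond_exp M (F (t - 1)) (\<lambda>\<omega>. ennreal ((X t \<omega> - \<mu>)\<^sup>2)) \<omega> \<le> ennreal (\<sigma>\<^sup>2)"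
    and "\<And>t. t \<ge> 1 \<Longrightarrow> lam t \<in> borel_measurable (F (t - 1))"
  shows "(\<forall>t \<omega>. M_SN X lam \<mu> \<sigma> t \<omega> \<ge> 0) \<and> supermartingale M F (M_SN X lam \<mu> \<sigma>)"
proof -
  interpret P: prob_space M by (rule assms(1))
  define G where "G = (\<lambda>i \<omega>. exp (lam i \<omega> * (X i \<omega> - \<mu>)
        - (lam i \<omega>)\<^sup>2 * ((X i \<omega> - \<mu>)\<^sup>2 + 2 * \<sigma>\<^sup>2) / 6))"
  define MS where "MS = M_SN X lam \<mu> \<sigma>"
  have MS0: "MS 0 = (\<lambda>_. 1)" by (simp add: MS_def M_SN_def fun_eq_iff)
  have MSS: "MS (Suc k) = (\<lambda>\<omega>. MS k \<omega> * G (Suc k) \<omega>)" for k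
    by (simp add: MS_def M_SN_def G_def fun_eq_iff prod.cl_ivl_Suc)
  have Gnn: "0 \<le> G i \<omega>" for i \<omega> by (simp add: G_def)
  have Gle: "G i \<omega> \<le> exp (3/2)" for i \<omega> unfolding G_def by (rule factor_le)
  have MSnn: "0 \<le> MS t \<omega>" for t \<omega>
    by (induction t) (simp_all add: MS0 MSS Gnn)
  have MSle: "MS t \<omega> \<le> exp (3/2) ^ t" for t \<omega>
  proof (induction t)
    case 0 then show ?case by (simp add: MS0)
  next
    case (Suc t)
    have "MS t \<omega> * G (Suc t) \<omega> \<le> exp (3/2) ^ t * exp (3/2)"
      using Suc MSnn Gnn Gle by (intro mult_mono) auto
    then show ?case by (simp add: MSS mult.commute)
  qed
  have subalg: "subalgebra M (F t)" for t using assms(2) by (simp add: is_filtration_def)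
  have sub2: "subalgebra (F t) (F s)" if "s \<le> t" for s t
    using assms(2) that subalg[of s] subalg[of t] by (auto simp: is_filtration_def subalgebra_def)
  have measmono: "f \<in> borel_measurable (F t)" if "f \<in> borel_measurable (F s)" "s \<le> t" for f s t
    by (rule measurable_from_subalg[OF sub2[OF that(2)] that(1)])
  have measM: "f \<in> borel_measurable M" if "f \<in> borel_measurable (F s)" for f s
    by (rule measurable_from_subalg[OF subalg that])
  have sfs: "sigma_finite_subalgebra M (F t)" for t
    by (rule finite_measure_subalgebra_is_sigma_finite)
       (simp add: finite_measure_subalgebra_def finite_measure_subalgebra_axioms_def subalg P.finite_measure_axioms)
  have Xm: "X (Suc k) \<in> borel_measurable (F (Suc k))" for k using assms(4)[of "Suc k"] by simp
  have Lm: "lam (Suc k) \<in> borel_measurable (F k)" for k using assms(8)[of "Suc k"] by simp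
  have Gm: "G (Suc k) \<in> borel_measurable (F (Suc k))" for k
  proof -
    note [measurable] = Xm[of k] measmono[OF Lm[of k], of "Suc k"]
    show ?thesis unfolding G_def by measurable
  qed
  have MSm: "MS t \<in> borel_measurable (F t)" for t
  proof (induction t)
    case 0 then show ?case by (simp add: MS0)
  next
    case (Suc t)
    note [measurable] = measmono[OF Suc, of "Suc t"] Gm[of t]
    show ?case unfolding MSS by measurable
  qed
  have MSi: "integrable M (MS t)" for t
    by (rule P.integrable_const_bound[where B="exp (3/2) ^ t"]) (auto simp: MSnn MSle measM[OF MSm])
  have Gi: "integrable M (G (Suc k))" for k
    by (rule P.integrable_const_bound[where B="exp (3/2)"]) (auto simp: Gnn Gle measM[OF Gm])
  have stp: "AE \<omega> in M. real_cond_exp M (F k) (MS (Suc k)) \<omega> \<le> MS k \<omega>" for k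
  proof -
    interpret S: sigma_finite_subalgebra M "F k" by (rule sfs)
    define Y where "Y = (\<lambda>\<omega>. X (Suc k) \<omega> - \<mu>)"
    define L where "L = lam (Suc k)"
    have Xi: "integrable M (X (Suc k))" using assms(5)[of "Suc k"] by simp
    have Yi: "integrable M Y" unfolding Y_def using Xi by simp
    have [measurable]: "L \<in> borel_measurable (F k)" unfolding L_def by (rule Lm)
    have [measurable]: "L \<in> borel_measurable M" unfolding L_def by (rule measM[OF Lm])
    have [measurable]: "Y \<in> borel_measurable M" unfolding Y_def using measM[OF Xm[of k]] by simp
    have nn: "AE \<omega> in M. nn_cond_exp M (F k) (\<lambda>\<omega>. ennreal ((Y \<omega>)\<^sup>2)) \<omega> \<le> ennreal (\<sigma>\<^sup>2)"
      using assms(7)[of "Suc k"] by (simp add: Y_def)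
    have "(\<integral>\<^sup>+\<omega>. ennreal ((Y \<omega>)\<^sup>2) \<partial>M) = (\<integral>\<^sup>+\<omega>. 1 * nn_cond_exp M (F k) (\<lambda>\<omega>. ennreal ((Y \<omega>)\<^sup>2)) \<omega> \<partial>M)"
      using S.nn_cond_exp_intg[of "\<lambda>_. 1" "\<lambda>\<omega>. ennreal ((Y \<omega>)\<^sup>2)"] by simp
    also have "\<dots> \<le> (\<integral>\<^sup>+\<omega>. ennreal (\<sigma>\<^sup>2) \<partial>M)"
      using nn by (intro nn_integral_mono_AE) auto
    also have "\<dots> = ennreal (\<sigma>\<^sup>2)" by (simp add: P.emeasure_space_1)
    finally have "(\<integral>\<^sup>+\<omega>. ennreal ((Y \<omega>)\<^sup>2) \<partial>M) < \<infinity>" using order.strict_trans1 by fastforce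
    then have Y2i: "integrable M (\<lambda>\<omega>. (Y \<omega>)\<^sup>2)" by (intro integrableI_nonneg) auto
    have EY2: "AE \<omega> in M. real_cond_exp M (F k) (\<lambda>\<omega>. (Y \<omega>)\<^sup>2) \<omega> \<le> \<sigma>\<^sup>2"
      using nn
    proof eventually_elim
      case (elim \<omega>)
      have "enn2real (nn_cond_exp M (F k) (\<lambda>\<omega>. ennreal ((Y \<omega>)\<^sup>2)) \<omega>) \<le> \<sigma>\<^sup>2"
        using elim by (intro enn2real_leI) auto
      then show ?case unfolding real_cond_exp_def
        using enn2real_nonneg[of "nn_cond_exp M (F k) (\<lambda>x. ennreal (- (Y x)\<^sup>2)) \<omega>"] by linarith
    qed
    have EY: "AE \<omega> in M. real_cond_exp M (F k) Y \<omega> = 0"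
    proof -
      have "AE \<omega> in M. real_cond_exp M (F k) (\<lambda>\<omega>. X (Suc k) \<omega> - \<mu>) \<omega> = real_cond_exp M (F k) (X (Suc k)) \<omega> - real_cond_exp M (F k) (\<lambda>_. \<mu>) \<omega>"
        using Xi by (intro S.real_cond_exp_diff) auto
      moreover have "AE \<omega> in M. real_cond_exp M (F k) (\<lambda>_. \<mu>) \<omega> = \<mu>"
        by (rule S.real_cond_exp_F_meas) auto
      moreover have "AE \<omega> in M. real_cond_exp M (F k) (X (Suc k)) \<omega> = \<mu>"
        using assms(6)[of "Suc k"] by simp
      ultimately show ?thesis unfolding Y_def by eventually_elim simp
    qed
    have Gform: "G (Suc k) \<omega> = exp (L \<omega> * Y \<omega> - (L \<omega>)\<^sup>2 * ((Y \<omega>)\<^sup>2 + 2 * \<sigma>\<^sup>2) / 6)" for \<omega>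
      by (simp add: G_def L_def Y_def)
    have [measurable]: "G (Suc k) \<in> borel_measurable M" by (rule measM[OF Gm])
    have loc: "AE \<omega> in M. \<omega> \<in> {\<omega>\<in>space M. \<bar>L \<omega>\<bar> \<le> real n} \<longrightarrow> real_cond_exp M (F k) (G (Suc k)) \<omega> \<le> 1" for n
    proof -
      define A where "A = {\<omega>\<in>space M. \<bar>L \<omega>\<bar> \<le> real n}"
      have spF: "space (F k) = space M" using subalg[of k] by (simp add: subalgebra_def)
      have "{\<omega>\<in>space (F k). \<bar>L \<omega>\<bar> \<le> real n} \<in> sets (F k)" by measurable
      then have AF[measurable]: "A \<in> sets (F k)" unfolding A_def spF .
      have AM[measurable]: "A \<in> sets M" using AF subalg[of k] by (auto simp: subalgebra_def)
      define c where "c = (\<lambda>\<omega>. exp (- ((L \<omega>)\<^sup>2 * \<sigma>\<^sup>2 / 3)))"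
      define B1 where "B1 = (\<lambda>\<omega>. indicator A \<omega> * c \<omega>)"
      define B2 where "B2 = (\<lambda>\<omega>. indicator A \<omega> * c \<omega> * L \<omega>)"
      define B3 where "B3 = (\<lambda>\<omega>. indicator A \<omega> * c \<omega> * (L \<omega>)\<^sup>2 / 3)"
      define H where "H = (\<lambda>\<omega>. (B1 \<omega> + B2 \<omega> * Y \<omega>) + B3 \<omega> * (Y \<omega>)\<^sup>2)"
      have B1m[measurable]: "B1 \<in> borel_measurable (F k)" unfolding B1_def c_def by measurable
      have B2m[measurable]: "B2 \<in> borel_measurable (F k)" unfolding B2_def c_def by measurable
      have B3m[measurable]: "B3 \<in> borel_measurable (F k)" unfolding B3_def c_def by measurable
      have cpos: "0 < c \<omega>" for \<omega> by (simp add: c_def)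
      have cle: "c \<omega> \<le> 1" for \<omega> by (simp add: c_def)
      have B1b: "\<bar>B1 \<omega>\<bar> \<le> 1" for \<omega> using cpos[of \<omega>] cle[of \<omega>]
        by (simp add: B1_def split: split_indicator)
      have B2b: "\<bar>B2 \<omega>\<bar> \<le> real n" if "\<omega> \<in> space M" for \<omega>
      proof (cases "\<omega> \<in> A")
        case True
        then have "\<bar>L \<omega>\<bar> \<le> real n" by (simp add: A_def)
        moreover have "c \<omega> * \<bar>L \<omega>\<bar> \<le> 1 * \<bar>L \<omega>\<bar>" using cle[of \<omega>] by (intro mult_right_mono) auto
        ultimately show ?thesis using True cpos[of \<omega>] by (simp add: B2_def abs_mult)
      qed (simp add: B2_def)
      have B3b: "\<bar>B3 \<omega>\<bar> \<le> real n ^ 2" if "\<omega> \<in> space M" for \<omega>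
      proof (cases "\<omega> \<in> A")
        case True
        then have "\<bar>L \<omega>\<bar> \<le> real n" by (simp add: A_def)
        then have "(L \<omega>)\<^sup>2 \<le> real n ^ 2" by (metis abs_le_square_iff abs_of_nat)
        moreover have "c \<omega> * (L \<omega>)\<^sup>2 \<le> 1 * (L \<omega>)\<^sup>2" using cle[of \<omega>] by (intro mult_right_mono) auto
        ultimately show ?thesis using True cpos[of \<omega>]
          apply (simp add: B3_def abs_mult) using zero_le_power2[of "real n"] by linarith
      qed (simp add: B3_def)
      have B1i: "integrable M B1"
        by (rule P.integrable_const_bound[where B=1]) (auto simp: B1b measM[OF B1m])
      have B2Yi: "integrable M (\<lambda>\<omega>. B2 \<omega> * Y \<omega>)"
        by (rule integrable_bdd_mult[OF Yi measM[OF B2m] B2b])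
      have B3Yi: "integrable M (\<lambda>\<omega>. B3 \<omega> * (Y \<omega>)\<^sup>2)"
        by (rule integrable_bdd_mult[OF Y2i measM[OF B3m] B3b])
      have Hi: "integrable M H" unfolding H_def using B1i B2Yi B3Yi by simp
      have IGi: "integrable M (\<lambda>\<omega>. indicator A \<omega> * G (Suc k) \<omega>)"
        by (rule integrable_bdd_mult[OF Gi, where B=1]) (auto split: split_indicator)
      have IGH: "indicator A \<omega> * G (Suc k) \<omega> \<le> H \<omega>" for \<omega>
      proof -
        have "G (Suc k) \<omega> \<le> c \<omega> * (1 + L \<omega> * Y \<omega> + (L \<omega>)\<^sup>2 * (Y \<omega>)\<^sup>2 / 3)"
          unfolding Gform c_def by (rule factor_le_poly)
        then have "indicator A \<omega> * G (Suc k) \<omega> \<le> indicator A \<omega> * (c \<omega> * (1 + L \<omega> * Y \<omega> + (L \<omega>)\<^sup>2 * (Y \<omega>)\<^sup>2 / 3))"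
          by (intro mult_left_mono) auto
        also have "\<dots> = H \<omega>" by (simp add: H_def B1_def B2_def B3_def algebra_simps)
        finally show ?thesis .
      qed
      have E1: "AE \<omega> in M. real_cond_exp M (F k) (\<lambda>\<omega>. indicator A \<omega> * G (Suc k) \<omega>) \<omega> \<le> real_cond_exp M (F k) H \<omega>"
        using IGH by (intro S.real_cond_exp_mono IGi Hi) auto
      have E2: "AE \<omega> in M. real_cond_exp M (F k) (\<lambda>\<omega>. indicator A \<omega> * G (Suc k) \<omega>) \<omega> = indicator A \<omega> * real_cond_exp M (F k) (G (Suc k)) \<omega>"
        using IGi by (intro S.real_cond_exp_mult) auto
      have E3: "AE \<omega> in M. real_cond_exp M (F k) H \<omega> = real_cond_exp M (F k) (\<lambda>\<omega>. B1 \<omega> + B2 \<omega> * Y \<omega>) \<omega> + real_cond_exp M (F k) (\<lambda>\<omega>. B3 \<omega> * (Y \<omega>)\<^sup>2) \<omega>"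
        unfolding H_def using B1i B2Yi B3Yi by (intro S.real_cond_exp_add) auto
      have E4: "AE \<omega> in M. real_cond_exp M (F k) (\<lambda>\<omega>. B1 \<omega> + B2 \<omega> * Y \<omega>) \<omega> = real_cond_exp M (F k) B1 \<omega> + real_cond_exp M (F k) (\<lambda>\<omega>. B2 \<omega> * Y \<omega>) \<omega>"
        using B1i B2Yi by (intro S.real_cond_exp_add) auto
      have E5: "AE \<omega> in M. real_cond_exp M (F k) B1 \<omega> = B1 \<omega>"
        by (rule S.real_cond_exp_F_meas[OF B1i B1m])
      have E6: "AE \<omega> in M. real_cond_exp M (F k) (\<lambda>\<omega>. B2 \<omega> * Y \<omega>) \<omega> = B2 \<omega> * real_cond_exp M (F k) Y \<omega>"
        using B2Yi by (intro S.real_cond_exp_mult) auto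
      have E7: "AE \<omega> in M. real_cond_exp M (F k) (\<lambda>\<omega>. B3 \<omega> * (Y \<omega>)\<^sup>2) \<omega> = B3 \<omega> * real_cond_exp M (F k) (\<lambda>\<omega>. (Y \<omega>)\<^sup>2) \<omega>"
        using B3Yi by (intro S.real_cond_exp_mult) auto
      show ?thesis using E1 E2 E3 E4 E5 E6 E7 EY EY2
      proof eventually_elim
        case (elim \<omega>)
        show ?case
        proof
          assume "\<omega> \<in> {\<omega> \<in> space M. \<bar>L \<omega>\<bar> \<le> real n}"
          then have inA: "\<omega> \<in> A" by (simp add: A_def)
          define e2 where "e2 = real_cond_exp M (F k) (\<lambda>\<omega>. (Y \<omega>)\<^sup>2) \<omega>"
          have "real_cond_exp M (F k) (G (Suc k)) \<omega> \<le> c \<omega> + c \<omega> * (L \<omega>)\<^sup>2 / 3 * e2"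
            using elim inA by (simp add: B1_def B2_def B3_def e2_def)
          also have "c \<omega> * (L \<omega>)\<^sup>2 / 3 * e2 \<le> c \<omega> * (L \<omega>)\<^sup>2 / 3 * \<sigma>\<^sup>2"
            using elim cpos[of \<omega>] by (intro mult_left_mono) (auto simp: e2_def)
          also have "c \<omega> + c \<omega> * (L \<omega>)\<^sup>2 / 3 * \<sigma>\<^sup>2 = exp (- ((L \<omega>)\<^sup>2 * \<sigma>\<^sup>2 / 3)) * (1 + (L \<omega>)\<^sup>2 * \<sigma>\<^sup>2 / 3)"
            by (simp add: c_def algebra_simps)
          also have "\<dots> \<le> 1" by (rule c_bound)
          finally show "real_cond_exp M (F k) (G (Suc k)) \<omega> \<le> 1" by simp
        qed
      qed
    qed
    have EG: "AE \<omega> in M. real_cond_exp M (F k) (G (Suc k)) \<omega> \<le> 1"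
    proof -
      have "AE \<omega> in M. \<forall>n. \<omega> \<in> {\<omega>\<in>space M. \<bar>L \<omega>\<bar> \<le> real n} \<longrightarrow> real_cond_exp M (F k) (G (Suc k)) \<omega> \<le> 1"
        unfolding AE_all_countable using loc by blast
      then show ?thesis using AE_space
      proof eventually_elim
        case (elim \<omega>)
        have "\<bar>L \<omega>\<bar> \<le> real (nat \<lceil>\<bar>L \<omega>\<bar>\<rceil>)" by (rule real_nat_ceiling_ge)
        then show ?case using elim by blast
      qed
    qed
    have "AE \<omega> in M. real_cond_exp M (F k) (\<lambda>\<omega>. MS k \<omega> * G (Suc k) \<omega>) \<omega> = MS k \<omega> * real_cond_exp M (F k) (G (Suc k)) \<omega>"
      using MSi[of "Suc k"] unfolding MSS by (intro S.real_cond_exp_mult MSm) auto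
    then show ?thesis using EG unfolding MSS
    proof eventually_elim
      case (elim \<omega>)
      then show ?case using MSnn[of k \<omega>] by (simp add: mult_left_le)
    qed
  qed
  have sm: "AE \<omega> in M. real_cond_exp M (F s) (MS t) \<omega> \<le> MS s \<omega>" if "s \<le> t" for s t
    using that
  proof (induction t rule: dec_induct)
    case base
    interpret S: sigma_finite_subalgebra M "F s" by (rule sfs)
    show ?case using S.real_cond_exp_F_meas[OF MSi MSm] by auto
  next
    case (step t)
    interpret S: sigma_finite_subalgebra M "F s" by (rule sfs)
    interpret T: sigma_finite_subalgebra M "F t" by (rule sfs)
    have "AE \<omega> in M. real_cond_exp M (F s) (real_cond_exp M (F t) (MS (Suc t))) \<omega> = real_cond_exp M (F s) (MS (Suc t)) \<omega>"
      by (rule S.real_cond_exp_nested_subalg[OF subalg sub2[OF step(1)] MSi])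
    moreover have "AE \<omega> in M. real_cond_exp M (F s) (real_cond_exp M (F t) (MS (Suc t))) \<omega> \<le> real_cond_exp M (F s) (MS t) \<omega>"
      by (rule S.real_cond_exp_mono[OF _ T.real_cond_exp_int(1)[OF MSi] MSi]) (rule stp[of t])
    ultimately show ?case using step.IH by auto
  qed
  show ?thesis
    unfolding MS_def[symmetric] supermartingale_def using MSnn MSm MSi sm by blast
qed

end
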